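(* Suppose that $G$ is a noncyclotomic nonbipartite graph containing a vertex $v$ such that the induced subgraph on $V(G)\setminus\{v\}$ is cyclotomic. Suppose also that $G$ is a line graph. Then $G$ is a Salem graph.
   Context: Graphs are finite simple graphs; eigenvalues are those of the adjacency matrix. A graph is cyclotomic if all its eigenvalues lie in $[-2,2]$. A line graph is a graph $L(H)$ whose vertices are the edges of some graph $H$, two being adjacent iff the edges share a vertex. A nonbipartite graph is a Salem graph if it has exactly one eigenvalue $\lambda>2$ and no eigenvalues in $(-\infty,-2)$. *)

theory Defs
  imports "Jordan_Normal_Form.Char_Poly"
begin

text \<open>A finite simple graph on the vertex set {0..<n}, given by an adjacency
relation E (only its values on {0..<n} matter).\<close>
definition simple_graph :: "nat \<Rightarrow> (nat \<Rightarrow> nat \<Rightarrow> bool) \<Rightarrow> bool" where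
  "simple_graph n E \<longleftrightarrow> (\<forall>i<n. \<forall>j<n. E i j = E j i) \<and> (\<forall>i<n. \<not> E i i)"

definition adj_mat :: "nat \<Rightarrow> (nat \<Rightarrow> nat \<Rightarrow> bool) \<Rightarrow> real mat" where
  "adj_mat n E = mat n n (\<lambda>(i, j). if E i j then 1 else 0)"

definition cyclotomic :: "nat \<Rightarrow> (nat \<Rightarrow> nat \<Rightarrow> bool) \<Rightarrow> bool" where
  "cyclotomic n E \<longleftrightarrow> (\<forall>x. eigenvalue (adj_mat n E) x \<longrightarrow> -2 \<le> x \<and> x \<le> 2)"

definition bipartite :: "nat \<Rightarrow> (nat \<Rightarrow> nat \<Rightarrow> bool) \<Rightarrow> bool" where
  "bipartite n E \<longleftrightarrow> (\<exists>c :: nat \<Rightarrow> bool. \<forall>i<n. \<forall>j<n. E i j \<longrightarrow> c i \<noteq> c j)"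

text \<open>G is a line graph: there is a finite simple graph H (on {0..<m}, edge
relation F) and a bijection f from V(G) onto the edge set of H (edges as
2-element sets) such that distinct vertices of G are adjacent iff their
images share an endpoint.\<close>
definition line_graph :: "nat \<Rightarrow> (nat \<Rightarrow> nat \<Rightarrow> bool) \<Rightarrow> bool" where
  "line_graph n E \<longleftrightarrow>
     (\<exists>(m::nat) (F :: nat \<Rightarrow> nat \<Rightarrow> bool) (f :: nat \<Rightarrow> nat set).
        simple_graph m F \<and>
        bij_betw f {0..<n} {{a, b} | a b. a < m \<and> b < m \<and> F a b} \<and>
        (\<forall>i<n. \<forall>j<n. i \<noteq> j \<longrightarrow> (E i j \<longleftrightarrow> f i \<inter> f j \<noteq> {})))"

text \<open>Induced subgraph on V \ {v}, relabelled onto {0..<n-1} preserving order.\<close>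
definition del_vertex :: "nat \<Rightarrow> (nat \<Rightarrow> nat \<Rightarrow> bool) \<Rightarrow> nat \<Rightarrow> nat \<Rightarrow> bool" where
  "del_vertex v E i j =
     E (if i < v then i else Suc i) (if j < v then j else Suc j)"

text \<open>Salem graph: nonbipartite, exactly one eigenvalue > 2 (counted with
multiplicity, i.e. as root of the characteristic polynomial), and no
eigenvalue < -2.\<close>
definition salem_graph :: "nat \<Rightarrow> (nat \<Rightarrow> nat \<Rightarrow> bool) \<Rightarrow> bool" where
  "salem_graph n E \<longleftrightarrow> \<not> bipartite n E \<and>
     (\<exists>r>2. eigenvalue (adj_mat n E) r \<and> order r (char_poly (adj_mat n E)) = 1 \<and>
        (\<forall>\<mu>>2. eigenvalue (adj_mat n E) \<mu> \<longrightarrow> \<mu> = r)) \<and>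
     (\<forall>\<mu>. eigenvalue (adj_mat n E) \<mu> \<longrightarrow> -2 \<le> \<mu>)"

end

theory Submission
  imports Defs
begin

lemma continuous_on_det:
  fixes F :: "real \<Rightarrow> real mat"
  assumes F: "\<And>x. x \<in> S \<Longrightarrow> F x \<in> carrier_mat k k"
    and c: "\<And>i j. i < k \<Longrightarrow> j < k \<Longrightarrow> continuous_on S (\<lambda>x. F x $$ (i,j))"
  shows "continuous_on S (\<lambda>x. det (F x))"
proof -
  have cs: "continuous_on S (\<lambda>x. \<Sum>p\<in>{p. p permutes {0..<k}}. signof p * (\<Prod>i=0..<k. F x $$ (i, p i)))"
    by (intro continuous_on_sum continuous_on_mult continuous_on_const continuous_on_prod c)
       (auto simp: permutes_in_image)
  show ?thesis
    by (rule continuous_on_cong[THEN iffD2, OF refl _ cs]) (simp add: det_def'[OF F])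
qed

lemma sum_insert_index:
  assumes v: "v < n"
  shows "(\<Sum>j<n. g j) = g v + (\<Sum>k<n-1. g (insert_index v k))"
proof -
  have "(\<Sum>j<n. g j) = g v + (\<Sum>j\<in>{..<n}-{v}. g j)"
    using v by (subst sum.remove[of _ v]) auto
  also have "(\<Sum>j\<in>{..<n}-{v}. g j) = (\<Sum>k<n-1. g (insert_index v k))"
  proof (rule sum.reindex_bij_betw[symmetric])
    show "bij_betw (insert_index v) {..<n - 1} ({..<n} - {v})"
      by (rule bij_betwI[where g="delete_index v"])
         (use v in \<open>auto simp: insert_index_def delete_index_def split: if_splits\<close>)
  qed
  finally show ?thesis .
qed

definition NI :: "real mat \<Rightarrow> real \<Rightarrow> real mat" where
  "NI A x = mat (dim_row A) (dim_row A) (\<lambda>(i,j). (if i = j then x else 0) - A $$ (i,j))"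

lemma NI_dim[simp]: "dim_row (NI A x) = dim_row A" "dim_col (NI A x) = dim_row A"
  by (auto simp: NI_def)

lemma NI_carrier[simp]: "A \<in> carrier_mat n n \<Longrightarrow> NI A x \<in> carrier_mat n n"
  by (auto simp: NI_def)

lemma NI_char_poly:
  assumes A: "A \<in> carrier_mat n n"
  shows "poly (char_poly A) x = det (NI A x)"
proof -
  have "- char_matrix A x = NI A x"
    by (rule eq_matI) (use A in \<open>auto simp: char_matrix_def NI_def\<close>)
  then show ?thesis using char_poly_matrix[OF A, of x] by simp
qed

lemma NI_delete:
  assumes A: "A \<in> carrier_mat n n" and v: "v < n"
  shows "mat_delete (NI A x) v v = NI (mat_delete A v v) x"
  by (rule eq_matI) (use A v in \<open>auto simp: mat_delete_def NI_def\<close>)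

lemma bordered_det:
  fixes N :: "'a::comm_ring_1 mat"
  assumes N: "N \<in> carrier_mat n n" and v: "v < n" and z: "z \<in> carrier_vec n" and zv: "z $ v = 1"
    and Nz: "\<And>i. i < n \<Longrightarrow> i \<noteq> v \<Longrightarrow> (N *\<^sub>v z) $ i = 0"
  shows "det N = (N *\<^sub>v z) $ v * det (mat_delete N v v)"
proof -
  define T where "T = mat n n (\<lambda>(i,j). if j = v then z $ i else if i = j then 1 else (0::'a))"
  have T: "T \<in> carrier_mat n n" by (simp add: T_def)
  have dT: "mat_delete T v v = 1\<^sub>m (n-1)"
    by (rule eq_matI) (use v in \<open>auto simp: mat_delete_def T_def\<close>)
  have "det T = (\<Sum>j<n. T $$ (v,j) * cofactor T v j)"
    by (rule laplace_expansion_row[OF T v])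
  also have "\<dots> = T $$ (v,v) * cofactor T v v"
    by (rule sum.remove[of _ v, THEN trans]) (use v in \<open>auto simp: T_def\<close>)
  also have "\<dots> = 1"
  proof -
    have "T $$ (v,v) = 1" using v zv by (simp add: T_def)
    then show ?thesis by (simp add: cofactor_def dT)
  qed
  finally have detT: "det T = 1" .
  have NT: "N * T \<in> carrier_mat n n" using N T by simp
  have NTcol: "(N * T) $$ (i, v) = (N *\<^sub>v z) $ i" if "i < n" for i
    using that N z v by (auto simp: T_def scalar_prod_def col_def intro!: sum.cong)
  have NTother: "(N * T) $$ (i, j) = N $$ (i,j)" if "i < n" "j < n" "j \<noteq> v" for i j
  proof -
    have "(N * T) $$ (i, j) = (\<Sum>k<n. N $$ (i,k) * (if k = j then 1 else 0))"
      using that N by (auto simp: T_def scalar_prod_def col_def row_def intro!: sum.cong)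
    also have "\<dots> = N $$ (i,j)" using that by (simp add: if_distrib sum.delta' cong: if_cong)
    finally show ?thesis .
  qed
  have NTother2: "row N i \<bullet> col T j = N $$ (i,j)" if "i < n" "j < n" "j \<noteq> v" for i j
    using NTother[OF that] N T that by simp
  have dNT: "mat_delete (N * T) v v = mat_delete N v v"
    by (rule eq_matI) (use v N T in \<open>auto simp: mat_delete_def NTother2\<close>)
  have "det N = det (N * T)" using det_mult[OF N T] detT by simp
  also have "\<dots> = (\<Sum>i<n. (N * T) $$ (i,v) * cofactor (N * T) i v)"
    by (rule laplace_expansion_column[OF NT v])
  also have "\<dots> = (N * T) $$ (v,v) * cofactor (N * T) v v"
    by (rule sum.remove[of _ v, THEN trans]) (use v in \<open>auto simp: NTcol Nz\<close>)
  also have "\<dots> = (N *\<^sub>v z) $ v * det (mat_delete N v v)"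
    using v by (simp add: NTcol cofactor_def dNT)
  finally show ?thesis .
qed

lemma cont_if_minus: "continuous_on S (\<lambda>x::real. (if P then x else 0) - c)"
  by (cases P) (auto intro: continuous_intros)

lemma NI_scalar:
  assumes A: "A \<in> carrier_mat n n" and u: "u \<in> carrier_vec n" and w: "w \<in> carrier_vec n"
  shows "w \<bullet> (NI A x *\<^sub>v u) = x * (w \<bullet> u) - (\<Sum>i<n. \<Sum>j<n. w $ i * A $$ (i,j) * u $ j)"
proof -
  have "w \<bullet> (NI A x *\<^sub>v u) = (\<Sum>i<n. w $ i * (\<Sum>j<n. ((if i = j then x else 0) - A $$ (i,j)) * u $ j))"
    using A u w by (auto simp: scalar_prod_def NI_def row_def lessThan_atLeast0 intro!: sum.cong)
  also have "\<dots> = (\<Sum>i<n. w $ i * (x * u $ i - (\<Sum>j<n. A $$ (i,j) * u $ j)))"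
  proof (rule sum.cong[OF refl])
    fix i assume "i \<in> {..<n}"
    then have i: "i < n" by simp
    have "(\<Sum>j<n. (if i = j then x else 0) * u $ j) = x * u $ i"
      using i by (subst sum.remove[of _ i]) auto
    then show "w $ i * (\<Sum>j<n. ((if i = j then x else 0) - A $$ (i,j)) * u $ j) =
      w $ i * (x * u $ i - (\<Sum>j<n. A $$ (i,j) * u $ j))"
      by (simp add: left_diff_distrib sum_subtractf)
  qed
  also have "\<dots> = x * (w \<bullet> u) - (\<Sum>i<n. \<Sum>j<n. w $ i * A $$ (i,j) * u $ j)"
    using u w by (simp add: scalar_prod_def right_diff_distrib sum_subtractf sum_distrib_left
        sum_distrib_right lessThan_atLeast0 mult_ac)
  finally show ?thesis .
qed

lemma interlace_phi:
  fixes A :: "real mat"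
  assumes A: "A \<in> carrier_mat n n"
    and sym: "\<And>i j. i < n \<Longrightarrow> j < n \<Longrightarrow> A $$ (i,j) = A $$ (j,i)"
    and v: "v < n"
    and noB: "\<And>x. x > 2 \<Longrightarrow> poly (char_poly (mat_delete A v v)) x \<noteq> 0"
  shows "\<exists>\<phi>. (\<forall>x>2. poly (char_poly A) x = \<phi> x * poly (char_poly (mat_delete A v v)) x) \<and>
             (\<forall>x>2. \<exists>D>0. (\<phi> has_real_derivative D) (at x))"
proof -
  define B where "B = mat_delete A v v"
  have B: "B \<in> carrier_mat (n-1) (n-1)" unfolding B_def by (rule mat_delete_carrier[OF A])
  define M where "M x = NI B x" for x
  have M: "M x \<in> carrier_mat (n-1) (n-1)" for x using B by (simp add: M_def)
  have Mdim[simp]: "dim_row (M x) = n-1" "dim_col (M x) = n-1" for x using M[of x] by auto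
  define d where "d x = det (M x)" for x
  have d: "d x = poly (char_poly B) x" for x using NI_char_poly[OF B] by (simp add: d_def M_def)
  have dnz: "x > 2 \<Longrightarrow> d x \<noteq> 0" for x using noB by (simp add: d B_def)
  define c where "c = vec (n-1) (\<lambda>k. A $$ (insert_index v k, v))"
  have c: "c \<in> carrier_vec (n-1)" by (simp add: c_def)
  define y where "y x = (1 / d x) \<cdot>\<^sub>v (Determinant.adj_mat (M x) *\<^sub>v c)" for x
  have y: "y x \<in> carrier_vec (n-1)" for x using mult_mat_vec_carrier[OF adj_mat(1)[OF M] c] by (simp add: y_def)
  have My: "M x *\<^sub>v y x = c" if "x > 2" for x
  proof -
    have "M x *\<^sub>v y x = (1 / d x) \<cdot>\<^sub>v (M x *\<^sub>v (Determinant.adj_mat (M x) *\<^sub>v c))"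
      unfolding y_def by (rule mult_mat_vec[OF M mult_mat_vec_carrier[OF adj_mat(1)[OF M] c]])
    also have "M x *\<^sub>v (Determinant.adj_mat (M x) *\<^sub>v c) = (M x * Determinant.adj_mat (M x)) *\<^sub>v c"
      using assoc_mult_mat_vec[OF M adj_mat(1)[OF M] c] by simp
    also have "\<dots> = d x \<cdot>\<^sub>v c"
      unfolding adj_mat(2)[OF M] d_def
    proof -
      have aux: "\<And>(a::real) b P. a * (if P then 1 else 0) * b = (if P then a * b else 0)" by simp
      show "det (M x) \<cdot>\<^sub>m 1\<^sub>m (n - 1) *\<^sub>v c = det (M x) \<cdot>\<^sub>v c"
        by (rule eq_vecI) (use c in \<open>auto simp: scalar_prod_def row_def aux sum.delta\<close>)
    qed
    finally show ?thesis using dnz[OF that] by auto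
  qed
  define z where "z x = vec n (\<lambda>i. if i = v then 1 else y x $ delete_index v i)" for x
  have z: "z x \<in> carrier_vec n" for x by (simp add: z_def)
  have zv: "z x $ v = 1" for x using v by (simp add: z_def)
  have zdim[simp]: "dim_vec (z x) = n" for x by (simp add: z_def)
  define \<phi> where "\<phi> x = (NI A x *\<^sub>v z x) $ v" for x
  have insk: "insert_index v k < n" "insert_index v k \<noteq> v" if "k < n-1" for k
    using that v by (auto simp: insert_index_def)
  have NIentry: "NI A x $$ (insert_index v a, insert_index v k) = M x $$ (a,k)"
    if "a < n-1" "k < n-1" for a k x
    using that v A by (auto simp: NI_def M_def B_def mat_delete_def insert_index_def)
  have zins: "z x $ insert_index v k = y x $ k" if "k < n-1" for k x
    using insk[OF that] by (simp add: z_def)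
  have Nz: "(NI A x *\<^sub>v z x) $ i = 0" if "x > 2" "i < n" "i \<noteq> v" for x i
  proof -
    define a where "a = delete_index v i"
    have a: "a < n - 1" and ia: "i = insert_index v a"
      using that v by (auto simp: a_def delete_index_def insert_index_def)
    have "(NI A x *\<^sub>v z x) $ i = (\<Sum>j<n. NI A x $$ (i,j) * z x $ j)"
      using A z that by (simp add: scalar_prod_def row_def lessThan_atLeast0)
    also have "\<dots> = NI A x $$ (i,v) * z x $ v + (\<Sum>k<n-1. NI A x $$ (i, insert_index v k) * z x $ insert_index v k)"
      by (rule sum_insert_index[OF v])
    also have "\<dots> = - c $ a + (\<Sum>k<n-1. M x $$ (a,k) * y x $ k)"
    proof -
      have "NI A x $$ (i,v) = - c $ a" using that A v a ia by (simp add: NI_def c_def)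
      moreover have "(\<Sum>k<n-1. NI A x $$ (i, insert_index v k) * z x $ insert_index v k) =
          (\<Sum>k<n-1. M x $$ (a,k) * y x $ k)"
        by (rule sum.cong[OF refl]) (simp add: ia NIentry[OF a] zins)
      ultimately show ?thesis using zv by simp
    qed
    also have "(\<Sum>k<n-1. M x $$ (a,k) * y x $ k) = c $ a"
    proof -
      have "(M x *\<^sub>v y x) $ a = c $ a" using My[OF that(1)] by simp
      then show ?thesis using M[of x] y[of x] a
        by (simp add: scalar_prod_def row_def lessThan_atLeast0)
    qed
    finally show ?thesis by simp
  qed
  have F6: "poly (char_poly A) x = \<phi> x * poly (char_poly B) x" if "x > 2" for x
  proof -
    have "poly (char_poly A) x = det (NI A x)" by (rule NI_char_poly[OF A])
    also have "\<dots> = \<phi> x * det (mat_delete (NI A x) v v)"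
      unfolding \<phi>_def by (rule bordered_det[OF NI_carrier[OF A] v z zv Nz[OF that]])
    also have "det (mat_delete (NI A x) v v) = poly (char_poly B) x"
      using NI_delete[OF A v] NI_char_poly[OF B] by (simp add: B_def)
    finally show ?thesis .
  qed
  have Nzv: "NI A x *\<^sub>v z x = \<phi> x \<cdot>\<^sub>v unit_vec n v" if "x > 2" for x
    by (rule eq_vecI) (use A v Nz[OF that] in \<open>auto simp: \<phi>_def unit_vec_def\<close>)
  have zN: "z t \<bullet> (NI A x *\<^sub>v z x) = \<phi> x" if "x > 2" for x t
    using Nzv[OF that] z[of t] zv[of t] v by simp
  have Ssym: "(\<Sum>i<n. \<Sum>j<n. w $ i * A $$ (i,j) * u $ j) = (\<Sum>i<n. \<Sum>j<n. u $ i * A $$ (i,j) * w $ j)"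
    for u w :: "real vec"
    by (subst sum.swap) (auto simp: sym mult_ac intro!: sum.cong)
  have F2: "\<phi> x - \<phi> t = (x - t) * (z x \<bullet> z t)" if "x > 2" "t > 2" for x t
  proof -
    have "\<phi> x = x * (z t \<bullet> z x) - (\<Sum>i<n. \<Sum>j<n. z t $ i * A $$ (i,j) * z x $ j)"
      using zN[OF that(1), of t] NI_scalar[OF A z[of x] z[of t], where x=x] by simp
    moreover have "\<phi> t = t * (z x \<bullet> z t) - (\<Sum>i<n. \<Sum>j<n. z x $ i * A $$ (i,j) * z t $ j)"
      using zN[OF that(2), of x] NI_scalar[OF A z[of t] z[of x], where x=t] by simp
    moreover have "z t \<bullet> z x = z x \<bullet> z t" by (rule comm_scalar_prod[OF z z])
    ultimately show ?thesis using Ssym[of "z t" "z x"] by (simp add: algebra_simps)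
  qed
  have Mcont: "continuous_on S (\<lambda>x. M x $$ (a,b))" if "a < n-1" "b < n-1" for a b S
    using that B by (simp add: M_def NI_def cont_if_minus)
  have dcont: "continuous_on S d" for S
    unfolding d_def by (rule continuous_on_det[OF M Mcont])
  have Dcont: "continuous_on S (\<lambda>x. det (mat_delete (M x) l k))" if "l < n-1" "k < n-1" for l k S
  proof (rule continuous_on_det)
    show "mat_delete (M x) l k \<in> carrier_mat (n-1-1) (n-1-1)" for x
      by (rule mat_delete_carrier[OF M])
    show "continuous_on S (\<lambda>x. mat_delete (M x) l k $$ (a, b))" if "a < n-1-1" "b < n-1-1" for a b
    proof -
      have "continuous_on S (\<lambda>x. M x $$ (if a < l then a else Suc a, if b < k then b else Suc b))"
        by (rule Mcont) (use that in auto)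
      then show ?thesis
        by (rule continuous_on_cong[THEN iffD1, OF refl, rotated]) (use that M in \<open>auto simp: mat_delete_def\<close>)
    qed
  qed
  have yform: "y x $ k = (1 / d x) * (\<Sum>l<n-1. ((-1)^(l+k) * det (mat_delete (M x) l k)) * c $ l)"
    if "k < n-1" for x k
    using that M[of x] c
    by (simp add: y_def Determinant.adj_mat_def cofactor_def scalar_prod_def row_def lessThan_atLeast0)
  have cont: "continuous_on {2<..} (\<lambda>x. z x $ i)" if "i < n" for i
  proof (cases "i = v")
    case True
    then show ?thesis using zv by simp
  next
    case False
    define k where "k = delete_index v i"
    have k: "k < n-1" and ik: "i = insert_index v k"
      using that v False by (auto simp: k_def delete_index_def insert_index_def)
    have "continuous_on {2<..} (\<lambda>x. (1 / d x) * (\<Sum>l<n-1. ((-1)^(l+k) * det (mat_delete (M x) l k)) * c $ l))"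
      by (intro continuous_intros dcont Dcont k) (auto dest: dnz)
    then show ?thesis
      by (rule continuous_on_cong[THEN iffD1, OF refl, rotated]) (simp add: ik zins[OF k] yform[OF k])
  qed
  have deriv: "(\<phi> has_real_derivative (z x \<bullet> z x)) (at x)" if "x > 2" for x
  proof -
    define g where "g t = (\<Sum>i<n. z t $ i * z x $ i)" for t
    have gc: "continuous_on {2<..} g"
      unfolding g_def by (intro continuous_intros cont) auto
    have "isCont g x"
      using gc that continuous_on_eq_continuous_at[of "{2<..}" g] by auto
    then have gl: "(g \<longlongrightarrow> g x) (at x)" by (simp add: isCont_def)
    have gx: "g x = z x \<bullet> z x" by (simp add: g_def scalar_prod_def lessThan_atLeast0)
    have ev: "\<forall>\<^sub>F t in at x. g t = (\<phi> t - \<phi> x) / (t - x)"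
    proof (rule eventually_mono[OF eventually_at_in_open[of "{2<..}" x]])
      fix t assume "t \<in> {2<..} - {x}"
      then have t: "t > 2" "t \<noteq> x" by auto
      have "\<phi> t - \<phi> x = (t - x) * (z t \<bullet> z x)" by (rule F2[OF t(1) that])
      then show "g t = (\<phi> t - \<phi> x) / (t - x)"
        using t by (simp add: g_def scalar_prod_def lessThan_atLeast0)
    qed (use that in auto)
    show ?thesis
      unfolding has_field_derivative_iff using Lim_transform_eventually[OF gl ev] gx by simp
  qed
  have pos: "z x \<bullet> z x > 0" for x
  proof -
    have "z x \<bullet> z x = (\<Sum>i<n. z x $ i * z x $ i)"
      using z[of x] by (simp add: scalar_prod_def lessThan_atLeast0)
    also have "\<dots> = z x $ v * z x $ v + (\<Sum>i\<in>{..<n}-{v}. z x $ i * z x $ i)"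
      using v by (subst sum.remove[of _ v]) auto
    also have "\<dots> \<ge> 1" using zv[of x] by (simp add: sum_nonneg)
    finally show ?thesis by simp
  qed
  show ?thesis
    using F6 deriv pos unfolding B_def by blast
qed

lemma interlace_conseq:
  fixes A :: "real mat"
  assumes A: "A \<in> carrier_mat n n"
    and sym: "\<And>i j. i < n \<Longrightarrow> j < n \<Longrightarrow> A $$ (i,j) = A $$ (j,i)"
    and v: "v < n"
    and noB: "\<And>x. x > 2 \<Longrightarrow> poly (char_poly (mat_delete A v v)) x \<noteq> 0"
  shows "\<And>r \<mu>. r > 2 \<Longrightarrow> \<mu> > 2 \<Longrightarrow> poly (char_poly A) r = 0 \<Longrightarrow> poly (char_poly A) \<mu> = 0 \<Longrightarrow> r = \<mu>"
    and "\<And>r. r > 2 \<Longrightarrow> poly (char_poly A) r = 0 \<Longrightarrow> order r (char_poly A) = 1"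
proof -
  obtain \<phi> where F6: "\<And>x. x > 2 \<Longrightarrow> poly (char_poly A) x = \<phi> x * poly (char_poly (mat_delete A v v)) x"
    and der: "\<And>x. x > 2 \<Longrightarrow> \<exists>D>0. (\<phi> has_real_derivative D) (at x)"
    using interlace_phi[OF A sym v noB] by blast
  have zero: "\<phi> x = 0" if "x > 2" "poly (char_poly A) x = 0" for x
    using F6[OF that(1)] that(2) noB[OF that(1)] by simp
  have mono: "\<phi> a < \<phi> b" if "2 < a" "a < b" for a b
  proof (rule DERIV_pos_imp_increasing[OF that(2)])
    fix x assume "a \<le> x" "x \<le> b"
    then have "x > 2" using that by linarith
    then show "\<exists>y. (\<phi> has_real_derivative y) (at x) \<and> 0 < y" using der by blast
  qed
  show "r = \<mu>" if "r > 2" "\<mu> > 2" "poly (char_poly A) r = 0" "poly (char_poly A) \<mu> = 0" for r \<mu>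
  proof (rule ccontr)
    assume "r \<noteq> \<mu>"
    then consider "r < \<mu>" | "\<mu> < r" by linarith
    then show False
      using mono[of r \<mu>] mono[of \<mu> r] zero[of r] zero[of \<mu>] that by cases auto
  qed
  show "order r (char_poly A) = 1" if r: "r > 2" "poly (char_poly A) r = 0" for r
  proof (rule ccontr)
    assume ne: "order r (char_poly A) \<noteq> 1"
    have nz: "char_poly A \<noteq> 0" using degree_monic_char_poly[OF A] by auto
    have o: "order r (char_poly A) = Suc (order r (pderiv (char_poly A)))"
      by (rule order_pderiv[OF nz r(2)])
    then have "order r (pderiv (char_poly A)) \<noteq> 0" using ne by simp
    then have p0: "poly (pderiv (char_poly A)) r = 0" by (simp add: order_root)
    obtain D where D: "D > 0" "(\<phi> has_real_derivative D) (at r)" using der[OF r(1)] by blast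
    let ?pB = "char_poly (mat_delete A v v)"
    have "((\<lambda>x. \<phi> x * poly ?pB x) has_real_derivative (D * poly ?pB r + poly (pderiv ?pB) r * \<phi> r)) (at r)"
      by (rule DERIV_mult[OF D(2) poly_DERIV])
    then have "(poly (char_poly A) has_real_derivative (D * poly ?pB r + poly (pderiv ?pB) r * \<phi> r)) (at r)"
      by (rule has_field_derivative_transform_within_open[where S="{2<..}"]) (use r F6 in auto)
    then have "poly (pderiv (char_poly A)) r = D * poly ?pB r + poly (pderiv ?pB) r * \<phi> r"
      by (rule DERIV_unique[OF poly_DERIV])
    then show False using p0 zero[OF r] D(1) noB[OF r(1)] by simp
  qed
qed

lemma line_graph_ev:
  assumes sg: "simple_graph n E" and lg: "line_graph n E"
    and ev: "eigenvalue (adj_mat n E) \<mu>"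
  shows "-2 \<le> \<mu>"
proof -
  let ?A = "adj_mat n E"
  obtain m F f where sF: "simple_graph m F"
    and bij: "bij_betw f {0..<n} {{a, b} | a b. a < m \<and> b < m \<and> F a b}"
    and adj: "\<forall>i<n. \<forall>j<n. i \<noteq> j \<longrightarrow> (E i j \<longleftrightarrow> f i \<inter> f j \<noteq> {})"
    using lg unfolding line_graph_def by blast
  have Adim: "?A \<in> carrier_mat n n" by (simp add: adj_mat_def)
  obtain x where x: "x \<in> carrier_vec n" "x \<noteq> 0\<^sub>v n" "?A *\<^sub>v x = \<mu> \<cdot>\<^sub>v x"
    using ev Adim unfolding eigenvalue_def eigenvector_def by auto
  have fi: "\<exists>a b. f i = {a,b} \<and> a < m \<and> b < m \<and> a \<noteq> b" if "i < n" for i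
  proof -
    have "f i \<in> {{a, b} | a b. a < m \<and> b < m \<and> F a b}"
      using bij that unfolding bij_betw_def by (metis atLeastLessThan_iff imageI le0)
    then obtain a b where "f i = {a,b}" "a < m" "b < m" "F a b" by blast
    moreover have "a \<noteq> b" using sF \<open>F a b\<close> \<open>a < m\<close> unfolding simple_graph_def by auto
    ultimately show ?thesis by blast
  qed
  have fsub: "f i \<subseteq> {..<m}" and fcard: "card (f i) = 2" and ffin: "finite (f i)" if "i < n" for i
    using fi[OF that] by auto
  have inj: "f i \<noteq> f j" if "i < n" "j < n" "i \<noteq> j" for i j
    using bij that unfolding bij_betw_def inj_on_def by auto
  have card_int: "card (f i \<inter> f j) = (if i = j then 2 else if E i j then 1 else 0)"
    if ij: "i < n" "j < n" for i j
  proof (cases "i = j")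
    case True then show ?thesis using fcard[OF ij(1)] by simp
  next
    case False
    show ?thesis
    proof (cases "E i j")
      case True
      then have ne: "f i \<inter> f j \<noteq> {}" using adj ij False by auto
      have "card (f i \<inter> f j) \<noteq> 0" using ne ffin[OF ij(1)] by auto
      moreover have "card (f i \<inter> f j) \<le> 1"
      proof (rule ccontr)
        assume "\<not> card (f i \<inter> f j) \<le> 1"
        then have c2: "card (f i \<inter> f j) \<ge> 2" by simp
        have "f i \<inter> f j = f i"
          by (rule card_subset_eq[OF ffin[OF ij(1)]]) (use c2 fcard[OF ij(1)] card_mono[OF ffin[OF ij(1)], of "f i \<inter> f j"] in auto)
        moreover have "f i \<inter> f j = f j"
          by (rule card_subset_eq[OF ffin[OF ij(2)]]) (use c2 fcard[OF ij(2)] card_mono[OF ffin[OF ij(2)], of "f i \<inter> f j"] in auto)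
        ultimately show False using inj[OF ij False] by simp
      qed
      ultimately show ?thesis using True False by simp
    next
      case nE: False
      then have "f i \<inter> f j = {}" using adj ij \<open>i \<noteq> j\<close> by auto
      then show ?thesis using nE \<open>i \<noteq> j\<close> by simp
    qed
  qed
  have Aent: "?A $$ (i,j) = (if E i j then 1 else 0)" if "i < n" "j < n" for i j
    using that by (simp add: adj_mat_def)
  have Eirr: "\<not> E i i" if "i < n" for i using sg that unfolding simple_graph_def by auto
  define s where "s a = (\<Sum>i<n. if a \<in> f i then x $ i else 0)" for a
  have inner: "(\<Sum>a<m. (if a \<in> f i then x $ i else 0) * (if a \<in> f j then x $ j else 0))
      = x $ i * x $ j * card (f i \<inter> f j)" if "i < n" "j < n" for i j
  proof -
    have "(\<Sum>a<m. (if a \<in> f i then x $ i else 0) * (if a \<in> f j then x $ j else 0))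
        = (\<Sum>a<m. if a \<in> f i \<inter> f j then x $ i * x $ j else 0)"
      by (rule sum.cong) auto
    also have "\<dots> = (\<Sum>a\<in>{a\<in>{..<m}. a \<in> f i \<inter> f j}. x $ i * x $ j)"
      by (rule sum.inter_filter[symmetric]) simp
    also have "{a\<in>{..<m}. a \<in> f i \<inter> f j} = f i \<inter> f j" using fsub[OF that(1)] by auto
    finally show ?thesis by simp
  qed
  have "0 \<le> (\<Sum>a<m. (s a)^2)" by (simp add: sum_nonneg)
  also have "(\<Sum>a<m. (s a)^2) = (\<Sum>a<m. \<Sum>i<n. \<Sum>j<n. (if a \<in> f i then x $ i else 0) * (if a \<in> f j then x $ j else 0))"
    by (simp add: s_def power2_eq_square sum_product)
  also have "\<dots> = (\<Sum>i<n. \<Sum>j<n. \<Sum>a<m. (if a \<in> f i then x $ i else 0) * (if a \<in> f j then x $ j else 0))"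
    by (subst sum.swap) (subst (2) sum.swap, rule refl)
  also have "\<dots> = (\<Sum>i<n. \<Sum>j<n. x $ i * x $ j * card (f i \<inter> f j))"
    by (intro sum.cong refl) (simp add: inner)
  also have "\<dots> = (\<Sum>i<n. \<Sum>j<n. 2 * (if i = j then x $ i * x $ j else 0) + x $ i * (?A $$ (i,j) * x $ j))"
    by (intro sum.cong refl) (auto simp: card_int Aent Eirr)
  also have "\<dots> = 2 * (\<Sum>i<n. x $ i * x $ i) + (\<Sum>i<n. x $ i * (\<Sum>j<n. ?A $$ (i,j) * x $ j))"
    by (simp add: sum.distrib sum_distrib_left[symmetric] sum.delta)
  also have "(\<Sum>i<n. x $ i * (\<Sum>j<n. ?A $$ (i,j) * x $ j)) = (\<Sum>i<n. x $ i * (?A *\<^sub>v x) $ i)"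
    using x(1) Adim by (intro sum.cong refl) (simp add: scalar_prod_def row_def lessThan_atLeast0)
  also have "\<dots> = \<mu> * (\<Sum>i<n. x $ i * x $ i)"
    using x(1,3) by (simp add: sum_distrib_left mult_ac)
  finally have "0 \<le> (2 + \<mu>) * (\<Sum>i<n. x $ i * x $ i)" by (simp add: algebra_simps)
  moreover have "(\<Sum>i<n. x $ i * x $ i) > 0"
  proof -
    obtain k where k: "k < n" "x $ k \<noteq> 0" using x(1,2) by (auto simp: vec_eq_iff)
    have "(\<Sum>i<n. x $ i * x $ i) = x $ k * x $ k + (\<Sum>i\<in>{..<n}-{k}. x $ i * x $ i)"
      using k by (subst sum.remove[of _ k]) auto
    moreover have "x $ k * x $ k > 0" using k not_real_square_gt_zero by blast
    moreover have "(\<Sum>i\<in>{..<n}-{k}. x $ i * x $ i) \<ge> 0" by (simp add: sum_nonneg)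
    ultimately show ?thesis by linarith
  qed
  ultimately have "2 + \<mu> \<ge> 0" by (simp add: zero_le_mult_iff)
  then show ?thesis by simp
qed

theorem theorem9:
  fixes n :: nat and E :: "nat \<Rightarrow> nat \<Rightarrow> bool" and v :: nat
  assumes "simple_graph n E"
    and "\<not> cyclotomic n E"
    and "\<not> bipartite n E"
    and "v < n"
    and "cyclotomic (n - 1) (del_vertex v E)"
    and "line_graph n E"
  shows "salem_graph n E"
proof -
  note sg = assms(1) and ncyc = assms(2) and nbip = assms(3) and v = assms(4)
    and cycB = assms(5) and lg = assms(6)
  let ?A = "adj_mat n E"
  have A: "?A \<in> carrier_mat n n" by (simp add: adj_mat_def)
  have sym: "?A $$ (i,j) = ?A $$ (j,i)" if "i < n" "j < n" for i j
    using sg that by (simp add: adj_mat_def simple_graph_def)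
  have Bdel: "mat_delete ?A v v = adj_mat (n-1) (del_vertex v E)"
    by (rule eq_matI) (use v in \<open>auto simp: adj_mat_def mat_delete_def del_vertex_def\<close>)
  have Bc: "adj_mat (n-1) (del_vertex v E) \<in> carrier_mat (n-1) (n-1)" by (simp add: adj_mat_def)
  have noB: "poly (char_poly (mat_delete ?A v v)) x \<noteq> 0" if "x > 2" for x
    using cycB that unfolding Bdel cyclotomic_def eigenvalue_root_char_poly[OF Bc, symmetric] by force
  have lb: "-2 \<le> \<mu>" if "eigenvalue ?A \<mu>" for \<mu> by (rule line_graph_ev[OF sg lg that])
  obtain r where r: "eigenvalue ?A r" "\<not> (-2 \<le> r \<and> r \<le> 2)"
    using ncyc unfolding cyclotomic_def by blast
  have r2: "r > 2" using r lb by force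
  have rr: "poly (char_poly ?A) r = 0" using r(1) eigenvalue_root_char_poly[OF A] by simp
  show ?thesis
    unfolding salem_graph_def
  proof (intro conjI exI[of _ r] allI impI)
    show "\<not> bipartite n E" by (rule nbip)
    show "2 < r" by (rule r2)
    show "eigenvalue ?A r" by (rule r(1))
    show "order r (char_poly ?A) = 1"
      by (rule interlace_conseq(2)[OF A sym v noB]) (use r2 rr in auto)
    show "\<mu> = r" if "2 < \<mu>" "eigenvalue ?A \<mu>" for \<mu>
      by (rule interlace_conseq(1)[OF A sym v noB])
         (use that r2 rr eigenvalue_root_char_poly[OF A] in auto)
    show "-2 \<le> \<mu>" if "eigenvalue ?A \<mu>" for \<mu> by (rule lb[OF that])
  qed
qed

end
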